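(* Let $\phi:(\mathcal C,S)\to(\mathcal D,T)$ be an admissible morphism from a finite quasi-schemoid whose underlying category is a groupoid to a basic quasi-schemoid, and let $n^\phi_\sigma$ ($\sigma\in S$) be the integers such that $\#(\phi^{-1}(g)\cap x\sigma)=n^\phi_\sigma$ for all $x\in ob(\mathcal C)$ and $g\in\phi(\sigma)$ with $t(g)=\phi(x)$. Then for all $\pi,\rho\in S$ and $\tau\in T$, $$\sum_{\sigma\in S:\ \phi(\sigma)=\tau}p^\sigma_{\pi\rho}\,n^\phi_\sigma=p^\tau_{\phi(\pi)\phi(\rho)}\,n^\phi_\pi\,n^\phi_\rho .$$
   Context: Write $s(f),t(f)$ for source and target. A quasi-schemoid is a pair $(\mathcal C,S)$ with $\mathcal C$ a small category and $S$ a partition of $mor(\mathcal C)$ into nonempty blocks such that for all $\sigma,\tau,\mu\in S$ and $f,g\in\mu$ the sets $\{(a,b)\in\sigma\times\tau: s(a)=t(b), a\circ b=f\}$ and the analogous set for $g$ have equal cardinality, denoted $p^\mu_{\sigma\tau}$. It is finite if $mor(\mathcal C)$ is finite; unital if every block meeting $\{1_x\}$ is contained in it; basic if unital and $\mathcal C$ is a groupoid. A morphism of quasi-schemoids $\phi$ is a functor such that each $\phi(\sigma)$ lies in a unique block of the target, also denoted $\phi(\sigma)$. $\phi$ is admissible if for every $x\in ob(\mathcal C)$, $\sigma\in S$ and $g\in\phi(\sigma)$ with $t(g)=\phi(x)$ there exists $f\in\sigma$ with $t(f)=x$ and $\phi(f)=g$. $x\sigma=\{f\in\sigma:t(f)=x\}$;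 the integers $n^\phi_\sigma$ exist and are positive under these hypotheses. *)

theory Defs
  imports Main "HOL-Library.Equipollence"
begin

text \<open>A small category, given explicitly by its object set, morphism set, source and
target maps, composition (comp a b = a o b, meaningful when src a = tgt b) and identities.\<close>

record ('o, 'm) cat =
  Ob   :: "'o set"
  Mor  :: "'m set"
  src  :: "'m \<Rightarrow> 'o"
  tgt  :: "'m \<Rightarrow> 'o"
  comp :: "'m \<Rightarrow> 'm \<Rightarrow> 'm"
  ident :: "'o \<Rightarrow> 'm"

definition category :: "('o, 'm) cat \<Rightarrow> bool" where
  "category C \<longleftrightarrow>
     (\<forall>f\<in>Mor C. src C f \<in> Ob C \<and> tgt C f \<in> Ob C) \<and>
     (\<forall>x\<in>Ob C. ident C x \<in> Mor C \<and> src C (ident C x) = x \<and> tgt C (ident C x) = x) \<and>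
     (\<forall>a\<in>Mor C. \<forall>b\<in>Mor C. src C a = tgt C b \<longrightarrow>
        comp C a b \<in> Mor C \<and> src C (comp C a b) = src C b \<and> tgt C (comp C a b) = tgt C a) \<and>
     (\<forall>a\<in>Mor C. \<forall>b\<in>Mor C. \<forall>c\<in>Mor C. src C a = tgt C b \<longrightarrow> src C b = tgt C c \<longrightarrow>
        comp C (comp C a b) c = comp C a (comp C b c)) \<and>
     (\<forall>f\<in>Mor C. comp C (ident C (tgt C f)) f = f \<and> comp C f (ident C (src C f)) = f)"

definition groupoid :: "('o, 'm) cat \<Rightarrow> bool" where
  "groupoid C \<longleftrightarrow> category C \<and>
     (\<forall>f\<in>Mor C. \<exists>g\<in>Mor C. src C g = tgt C f \<and> tgt C g = src C f \<and>
        comp C g f = ident C (src C f) \<and> comp C f g = ident C (tgt C f))"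

definition is_partition :: "'m set set \<Rightarrow> 'm set \<Rightarrow> bool" where
  "is_partition S M \<longleftrightarrow> (\<forall>\<sigma>\<in>S. \<sigma> \<noteq> {}) \<and> \<Union>S = M \<and>
     (\<forall>\<sigma>\<in>S. \<forall>\<tau>\<in>S. \<sigma> \<noteq> \<tau> \<longrightarrow> \<sigma> \<inter> \<tau> = {})"

definition fact_pairs :: "('o, 'm) cat \<Rightarrow> 'm set \<Rightarrow> 'm set \<Rightarrow> 'm \<Rightarrow> ('m \<times> 'm) set" where
  "fact_pairs C \<sigma> \<tau> f = {(a, b). a \<in> \<sigma> \<and> b \<in> \<tau> \<and> src C a = tgt C b \<and> comp C a b = f}"

definition quasi_schemoid :: "('o, 'm) cat \<Rightarrow> 'm set set \<Rightarrow> bool" where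
  "quasi_schemoid C S \<longleftrightarrow> category C \<and> is_partition S (Mor C) \<and>
     (\<forall>\<sigma>\<in>S. \<forall>\<tau>\<in>S. \<forall>\<mu>\<in>S. \<forall>f\<in>\<mu>. \<forall>g\<in>\<mu>.
        fact_pairs C \<sigma> \<tau> f \<approx> fact_pairs C \<sigma> \<tau> g)"

definition pconst :: "('o, 'm) cat \<Rightarrow> 'm set \<Rightarrow> 'm set \<Rightarrow> 'm set \<Rightarrow> nat" where
  "pconst C \<mu> \<sigma> \<tau> = card (fact_pairs C \<sigma> \<tau> (SOME f. f \<in> \<mu>))"

definition finite_qs :: "('o, 'm) cat \<Rightarrow> 'm set set \<Rightarrow> bool" where
  "finite_qs C S \<longleftrightarrow> quasi_schemoid C S \<and> finite (Mor C)"

definition unital :: "('o, 'm) cat \<Rightarrow> 'm set set \<Rightarrow> bool" where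
  "unital C S \<longleftrightarrow> quasi_schemoid C S \<and>
     (\<forall>\<sigma>\<in>S. \<sigma> \<inter> ident C ` Ob C \<noteq> {} \<longrightarrow> \<sigma> \<subseteq> ident C ` Ob C)"

definition basic :: "('o, 'm) cat \<Rightarrow> 'm set set \<Rightarrow> bool" where
  "basic C S \<longleftrightarrow> unital C S \<and> groupoid C"

definition is_functor :: "('o, 'm) cat \<Rightarrow> ('p, 'n) cat \<Rightarrow> ('o \<Rightarrow> 'p) \<Rightarrow> ('m \<Rightarrow> 'n) \<Rightarrow> bool" where
  "is_functor C D Fo Fm \<longleftrightarrow>
     (\<forall>x\<in>Ob C. Fo x \<in> Ob D) \<and>
     (\<forall>f\<in>Mor C. Fm f \<in> Mor D \<and> src D (Fm f) = Fo (src C f) \<and> tgt D (Fm f) = Fo (tgt C f)) \<and>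
     (\<forall>a\<in>Mor C. \<forall>b\<in>Mor C. src C a = tgt C b \<longrightarrow> Fm (comp C a b) = comp D (Fm a) (Fm b)) \<and>
     (\<forall>x\<in>Ob C. Fm (ident C x) = ident D (Fo x))"

definition blk :: "'n set set \<Rightarrow> ('m \<Rightarrow> 'n) \<Rightarrow> 'm set \<Rightarrow> 'n set" where
  "blk T Fm \<sigma> = (THE \<tau>. \<tau> \<in> T \<and> Fm ` \<sigma> \<subseteq> \<tau>)"

definition qs_morphism ::
  "('o, 'm) cat \<Rightarrow> 'm set set \<Rightarrow> ('p, 'n) cat \<Rightarrow> 'n set set \<Rightarrow> ('o \<Rightarrow> 'p) \<Rightarrow> ('m \<Rightarrow> 'n) \<Rightarrow> bool" where
  "qs_morphism C S D T Fo Fm \<longleftrightarrow> quasi_schemoid C S \<and> quasi_schemoid D T \<and>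
     is_functor C D Fo Fm \<and> (\<forall>\<sigma>\<in>S. \<exists>!\<tau>. \<tau> \<in> T \<and> Fm ` \<sigma> \<subseteq> \<tau>)"

definition admissible ::
  "('o, 'm) cat \<Rightarrow> 'm set set \<Rightarrow> ('p, 'n) cat \<Rightarrow> 'n set set \<Rightarrow> ('o \<Rightarrow> 'p) \<Rightarrow> ('m \<Rightarrow> 'n) \<Rightarrow> bool" where
  "admissible C S D T Fo Fm \<longleftrightarrow> qs_morphism C S D T Fo Fm \<and>
     (\<forall>x\<in>Ob C. \<forall>\<sigma>\<in>S. \<forall>g\<in>blk T Fm \<sigma>. tgt D g = Fo x \<longrightarrow>
        (\<exists>f\<in>\<sigma>. tgt C f = x \<and> Fm f = g))"

end

theory Submission
  imports Defs
begin

lemma eqpoll_card_eq: "A \<approx> B \<Longrightarrow> card A = card B"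
  by (metis card.infinite eqpoll_finite_iff eqpoll_iff_card)

lemma pconst_eq:
  assumes "quasi_schemoid C S" "\<mu> \<in> S" "\<sigma> \<in> S" "\<tau> \<in> S" "f \<in> \<mu>"
  shows "pconst C \<mu> \<sigma> \<tau> = card (fact_pairs C \<sigma> \<tau> f)"
proof -
  have "(SOME f. f \<in> \<mu>) \<in> \<mu>" using assms(5) by (rule someI)
  then have "fact_pairs C \<sigma> \<tau> (SOME f. f \<in> \<mu>) \<approx> fact_pairs C \<sigma> \<tau> f"
    using assms unfolding quasi_schemoid_def by blast
  then show ?thesis unfolding pconst_def by (rule eqpoll_card_eq)
qed

lemma blk_props:
  assumes "qs_morphism C S D T Fo Fm" "\<sigma> \<in> S"
  shows "blk T Fm \<sigma> \<in> T \<and> Fm ` \<sigma> \<subseteq> blk T Fm \<sigma>"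
proof -
  have "\<exists>!\<tau>. \<tau> \<in> T \<and> Fm ` \<sigma> \<subseteq> \<tau>" using assms unfolding qs_morphism_def by blast
  then show ?thesis unfolding blk_def by (rule theI')
qed

lemma part_uniq:
  assumes "is_partition T M" "\<alpha> \<in> T" "\<beta> \<in> T" "y \<in> \<alpha>" "y \<in> \<beta>"
  shows "\<alpha> = \<beta>"
  using assms unfolding is_partition_def by blast

theorem lemma6p6:
  fixes C :: "('o, 'm) cat" and S :: "'m set set"
    and D :: "('p, 'n) cat" and T :: "'n set set"
    and Fo :: "'o \<Rightarrow> 'p" and Fm :: "'m \<Rightarrow> 'n"
    and n :: "'m set \<Rightarrow> nat"
  assumes "finite_qs C S" and "groupoid C" and "basic D T"
    and "admissible C S D T Fo Fm"
    and "\<forall>\<sigma>\<in>S. \<forall>x\<in>Ob C. \<forall>g\<in>blk T Fm \<sigma>. tgt D g = Fo x \<longrightarrow>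
           card {f \<in> \<sigma>. tgt C f = x \<and> Fm f = g} = n \<sigma>"
    and "\<pi> \<in> S" and "\<rho> \<in> S" and "\<tau> \<in> T"
  shows "(\<Sum>\<sigma> \<in> {\<sigma> \<in> S. blk T Fm \<sigma> = \<tau>}. pconst C \<sigma> \<pi> \<rho> * n \<sigma>)
           = pconst D \<tau> (blk T Fm \<pi>) (blk T Fm \<rho>) * n \<pi> * n \<rho>"
proof -
  have qsC: "quasi_schemoid C S" and finC: "finite (Mor C)"
    using assms(1) unfolding finite_qs_def by auto
  have catC: "category C" and partC: "is_partition S (Mor C)"
    using qsC unfolding quasi_schemoid_def by auto
  have mor: "qs_morphism C S D T Fo Fm" using assms(4) unfolding admissible_def by auto
  have adm: "\<forall>x\<in>Ob C. \<forall>\<sigma>\<in>S. \<forall>g\<in>blk T Fm \<sigma>. tgt D g = Fo x \<longrightarrow> (\<exists>f\<in>\<sigma>. tgt C f = x \<and> Fm f = g)"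
    using assms(4) unfolding admissible_def by auto
  have qsD: "quasi_schemoid D T" and func: "is_functor C D Fo Fm"
    using mor unfolding qs_morphism_def by auto
  have grpD: "groupoid D" using assms(3) unfolding basic_def by auto
  have catD: "category D" and partD: "is_partition T (Mor D)"
    using qsD unfolding quasi_schemoid_def by auto
  have blkT: "\<And>\<sigma>. \<sigma> \<in> S \<Longrightarrow> blk T Fm \<sigma> \<in> T" using blk_props[OF mor] by blast
  have blkI: "\<And>\<sigma> f. \<sigma> \<in> S \<Longrightarrow> f \<in> \<sigma> \<Longrightarrow> Fm f \<in> blk T Fm \<sigma>" using blk_props[OF mor] by blast
  have SC: "\<And>\<sigma>. \<sigma> \<in> S \<Longrightarrow> \<sigma> \<subseteq> Mor C" using partC unfolding is_partition_def by blast
  have TD: "\<And>\<sigma>. \<sigma> \<in> T \<Longrightarrow> \<sigma> \<subseteq> Mor D" using partD unfolding is_partition_def by blast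
  have Sne: "\<And>\<sigma>. \<sigma> \<in> S \<Longrightarrow> \<sigma> \<noteq> {}" using partC unfolding is_partition_def by blast
  have Tne: "\<And>\<sigma>. \<sigma> \<in> T \<Longrightarrow> \<sigma> \<noteq> {}" using partD unfolding is_partition_def by blast
  have finS: "finite S" using finC partC unfolding is_partition_def
    by (metis Pow_iff finite_Pow_iff finite_subset subsetI Union_upper)
  let ?St = "{\<sigma> \<in> S. blk T Fm \<sigma> = \<tau>}"
  let ?a = "blk T Fm \<pi>" and ?b = "blk T Fm \<rho>"
  have aT: "?a \<in> T" and bT: "?b \<in> T" using blkT assms(6,7) by auto
  show ?thesis
  proof (cases "\<exists>h\<in>\<tau>. \<exists>x\<in>Ob C. tgt D h = Fo x")
    case False
    have St: "?St = {}"
    proof (rule ccontr)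
      assume "?St \<noteq> {}"
      then obtain \<sigma> where s: "\<sigma> \<in> S" "blk T Fm \<sigma> = \<tau>" by auto
      then obtain f where f: "f \<in> \<sigma>" using Sne by blast
      have "Fm f \<in> \<tau>" using blkI s f by auto
      moreover have "f \<in> Mor C" using SC s f by auto
      moreover have "tgt D (Fm f) = Fo (tgt C f)" "tgt C f \<in> Ob C"
        using func catC \<open>f \<in> Mor C\<close> unfolding is_functor_def category_def by auto
      ultimately show False using False by blast
    qed
    define h0 where "h0 = (SOME f. f \<in> \<tau>)"
    have h0: "h0 \<in> \<tau>" unfolding h0_def using Tne[OF assms(8)] by (simp add: some_in_eq)
    have "fact_pairs D ?a ?b h0 = {}"
    proof (rule ccontr)
      assume "fact_pairs D ?a ?b h0 \<noteq> {}"
      then obtain a b where ab: "a \<in> ?a" "b \<in> ?b" "src D a = tgt D b" "comp D a b = h0"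
        unfolding fact_pairs_def by auto
      have aM: "a \<in> Mor D" and bM: "b \<in> Mor D" using ab TD aT bT by auto
      obtain bi where bi: "bi \<in> Mor D" "src D bi = tgt D b" "tgt D bi = src D b"
        "comp D b bi = ident D (tgt D b)"
        using grpD bM unfolding groupoid_def by metis
      obtain \<beta>' where \<beta>': "\<beta>' \<in> T" "bi \<in> \<beta>'" using partD bi(1) unfolding is_partition_def by blast
      have "comp D h0 bi = comp D a (comp D b bi)"
        using catD aM bM bi ab unfolding category_def by (metis)
      also have "\<dots> = a" using catD aM bi ab unfolding category_def by metis
      finally have hb: "comp D h0 bi = a" .
      have "src D h0 = tgt D bi" using catD aM bM ab bi unfolding category_def by metis
      then have ne: "(h0, bi) \<in> fact_pairs D \<tau> \<beta>' a"
        unfolding fact_pairs_def using h0 \<beta>' hb by auto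
      obtain f0 where f0: "f0 \<in> \<pi>" using Sne assms(6) by blast
      have a0: "Fm f0 \<in> ?a" using blkI assms(6) f0 by auto
      have "fact_pairs D \<tau> \<beta>' a \<approx> fact_pairs D \<tau> \<beta>' (Fm f0)"
        using qsD assms(8) \<beta>' aT ab(1) a0 unfolding quasi_schemoid_def by blast
      then have "fact_pairs D \<tau> \<beta>' (Fm f0) \<noteq> {}" using ne
        by (metis empty_iff eqpoll_empty_iff_empty eqpoll_sym)
      then obtain h' c where hc: "h' \<in> \<tau>" "c \<in> \<beta>'" "src D h' = tgt D c" "comp D h' c = Fm f0"
        unfolding fact_pairs_def by auto
      have "h' \<in> Mor D" "c \<in> Mor D" using hc TD assms(8) \<beta>' by auto
      then have "tgt D h' = tgt D (Fm f0)" using catD hc unfolding category_def by metis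
      moreover have f0M: "f0 \<in> Mor C" using SC assms(6) f0 by auto
      then have "tgt D (Fm f0) = Fo (tgt C f0)" "tgt C f0 \<in> Ob C"
        using func catC unfolding is_functor_def category_def by auto
      ultimately show False using False hc(1) by metis
    qed
    then have "pconst D \<tau> ?a ?b = 0" unfolding pconst_def h0_def by simp
    then show ?thesis unfolding St by simp
  next
    case True
    then obtain h x where hx: "h \<in> \<tau>" "x \<in> Ob C" "tgt D h = Fo x" by blast
    define X where "X = {(a, b). a \<in> \<pi> \<and> b \<in> \<rho> \<and> src C a = tgt C b \<and> tgt C a = x \<and> Fm (comp C a b) = h}"
    define F where "F = {f \<in> Mor C. tgt C f = x \<and> Fm f = h}"
    define Fs where "Fs = (\<lambda>\<sigma>. {f \<in> \<sigma>. tgt C f = x \<and> Fm f = h})"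
    have piM: "\<pi> \<subseteq> Mor C" and rhoM: "\<rho> \<subseteq> Mor C" using SC assms(6,7) by auto
    have finX: "finite X"
      by (rule finite_subset[of _ "Mor C \<times> Mor C"]) (use piM rhoM finC X_def in auto)
    have finF: "finite F" using finC F_def by auto
    have finFP: "\<And>f. finite (fact_pairs C \<pi> \<rho> f)"
      by (rule finite_subset[of _ "Mor C \<times> Mor C"]) (use piM rhoM finC in \<open>auto simp: fact_pairs_def\<close>)
    have XU: "X = (\<Union>f\<in>F. fact_pairs C \<pi> \<rho> f)"
    proof
      show "X \<subseteq> (\<Union>f\<in>F. fact_pairs C \<pi> \<rho> f)"
      proof
        fix p assume "p \<in> X"
        then obtain a b where p: "p = (a, b)" "a \<in> \<pi>" "b \<in> \<rho>" "src C a = tgt C b" "tgt C a = x"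
          "Fm (comp C a b) = h" unfolding X_def by auto
        have "a \<in> Mor C" "b \<in> Mor C" using p piM rhoM by auto
        then have "comp C a b \<in> Mor C" "tgt C (comp C a b) = tgt C a"
          using catC p unfolding category_def by auto
        then have "comp C a b \<in> F" using p F_def by auto
        moreover have "p \<in> fact_pairs C \<pi> \<rho> (comp C a b)" using p unfolding fact_pairs_def by auto
        ultimately show "p \<in> (\<Union>f\<in>F. fact_pairs C \<pi> \<rho> f)" by blast
      qed
    next
      show "(\<Union>f\<in>F. fact_pairs C \<pi> \<rho> f) \<subseteq> X"
      proof
        fix p assume "p \<in> (\<Union>f\<in>F. fact_pairs C \<pi> \<rho> f)"
        then obtain f a b where p: "f \<in> F" "p = (a, b)" "a \<in> \<pi>" "b \<in> \<rho>" "src C a = tgt C b"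
          "comp C a b = f" unfolding fact_pairs_def by auto
        have "a \<in> Mor C" "b \<in> Mor C" using p piM rhoM by auto
        then have "tgt C (comp C a b) = tgt C a"
          using catC p unfolding category_def by auto
        then show "p \<in> X" using p F_def X_def by auto
      qed
    qed
    have "card X = (\<Sum>f\<in>F. card (fact_pairs C \<pi> \<rho> f))"
      unfolding XU by (rule card_UN_disjoint) (use finF finFP in \<open>auto simp: fact_pairs_def\<close>)
    also have "F = (\<Union>\<sigma>\<in>?St. Fs \<sigma>)"
    proof
      show "F \<subseteq> (\<Union>\<sigma>\<in>?St. Fs \<sigma>)"
      proof
        fix f assume f: "f \<in> F"
        then have "f \<in> Mor C" using F_def by auto
        then obtain \<sigma> where s: "\<sigma> \<in> S" "f \<in> \<sigma>" using partC unfolding is_partition_def by blast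
        have "Fm f \<in> blk T Fm \<sigma>" using blkI s by auto
        then have "blk T Fm \<sigma> = \<tau>" using part_uniq[OF partD blkT[OF s(1)] assms(8)] f hx(1) F_def by auto
        then show "f \<in> (\<Union>\<sigma>\<in>?St. Fs \<sigma>)" using s f F_def Fs_def by auto
      qed
    next
      show "(\<Union>\<sigma>\<in>?St. Fs \<sigma>) \<subseteq> F" using SC unfolding F_def Fs_def by auto
    qed
    also have "(\<Sum>f\<in>(\<Union>\<sigma>\<in>?St. Fs \<sigma>). card (fact_pairs C \<pi> \<rho> f))
        = (\<Sum>\<sigma>\<in>?St. \<Sum>f\<in>Fs \<sigma>. card (fact_pairs C \<pi> \<rho> f))"
    proof (rule sum.UNION_disjoint)
      show "finite ?St" using finS by auto
      show "\<forall>i\<in>?St. finite (Fs i)" using SC finC Fs_def by (auto intro: finite_subset)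
      show "\<forall>i\<in>?St. \<forall>j\<in>?St. i \<noteq> j \<longrightarrow> Fs i \<inter> Fs j = {}"
        using partC unfolding is_partition_def Fs_def by blast
    qed
    also have "\<dots> = (\<Sum>\<sigma>\<in>?St. pconst C \<sigma> \<pi> \<rho> * n \<sigma>)"
    proof (rule sum.cong)
      fix \<sigma> assume s: "\<sigma> \<in> ?St"
      have "(\<Sum>f\<in>Fs \<sigma>. card (fact_pairs C \<pi> \<rho> f)) = (\<Sum>f\<in>Fs \<sigma>. pconst C \<sigma> \<pi> \<rho>)"
      proof (rule sum.cong)
        fix f assume "f \<in> Fs \<sigma>"
        then show "card (fact_pairs C \<pi> \<rho> f) = pconst C \<sigma> \<pi> \<rho>"
          using pconst_eq[OF qsC _ assms(6,7)] s unfolding Fs_def by auto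
      qed simp
      also have "\<dots> = card (Fs \<sigma>) * pconst C \<sigma> \<pi> \<rho>" by simp
      also have "card (Fs \<sigma>) = n \<sigma>" using assms(5) s hx unfolding Fs_def by auto
      finally show "(\<Sum>f\<in>Fs \<sigma>. card (fact_pairs C \<pi> \<rho> f)) = pconst C \<sigma> \<pi> \<rho> * n \<sigma>" by simp
    qed simp
    finally have L: "card X = (\<Sum>\<sigma>\<in>?St. pconst C \<sigma> \<pi> \<rho> * n \<sigma>)" .
    define FP where "FP = fact_pairs D ?a ?b h"
    define g where "g = (\<lambda>(a, b). (Fm a, Fm b))"
    define fib where "fib = (\<lambda>q. {p \<in> X. g p = q})"
    have gX: "g ` X = FP"
    proof
      show "g ` X \<subseteq> FP"
      proof
        fix q assume "q \<in> g ` X"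
        then obtain a b where p: "q = (Fm a, Fm b)" "a \<in> \<pi>" "b \<in> \<rho>" "src C a = tgt C b"
          "Fm (comp C a b) = h" unfolding X_def g_def by auto
        have "a \<in> Mor C" "b \<in> Mor C" using p piM rhoM by auto
        then have "Fm (comp C a b) = comp D (Fm a) (Fm b)" "src D (Fm a) = tgt D (Fm b)"
          using func p unfolding is_functor_def by auto
        then show "q \<in> FP" using p blkI assms(6,7) unfolding FP_def fact_pairs_def by auto
      qed
    next
      show "FP \<subseteq> g ` X"
      proof
        fix q assume "q \<in> FP"
        then obtain a' b' where q: "q = (a', b')" "a' \<in> ?a" "b' \<in> ?b" "src D a' = tgt D b'"
          "comp D a' b' = h" unfolding FP_def fact_pairs_def by auto
        have "a' \<in> Mor D" "b' \<in> Mor D" using q TD aT bT by auto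
        then have "tgt D a' = tgt D h" using catD q unfolding category_def by metis
        then obtain a where a: "a \<in> \<pi>" "tgt C a = x" "Fm a = a'" using adm hx assms(6) q by metis
        have aM: "a \<in> Mor C" using a piM by auto
        then have "src C a \<in> Ob C" "src D a' = Fo (src C a)"
          using catC func a unfolding category_def is_functor_def by auto
        then obtain b where b: "b \<in> \<rho>" "tgt C b = src C a" "Fm b = b'" using adm assms(7) q by metis
        have "b \<in> Mor C" using b rhoM by auto
        then have "Fm (comp C a b) = comp D a' b'" using func aM a b unfolding is_functor_def by auto
        then have "(a, b) \<in> X" using a b q unfolding X_def by auto
        then show "q \<in> g ` X" using a b q g_def by force
      qed
    qed
    have "card X = card (\<Union>q\<in>g ` X. fib q)"
      by (rule arg_cong[where f=card]) (auto simp: fib_def)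
    also have "\<dots> = (\<Sum>q\<in>g ` X. card (fib q))"
      by (rule card_UN_disjoint) (use finX in \<open>auto simp: fib_def\<close>)
    also have "\<dots> = (\<Sum>q\<in>FP. n \<pi> * n \<rho>)"
    proof (rule sum.cong)
      fix q assume "q \<in> FP"
      then obtain a' b' where q: "q = (a', b')" "a' \<in> ?a" "b' \<in> ?b" "src D a' = tgt D b'"
        "comp D a' b' = h" unfolding FP_def fact_pairs_def by auto
      have "a' \<in> Mor D" "b' \<in> Mor D" using q TD aT bT by auto
      then have ta: "tgt D a' = Fo x" using catD q hx unfolding category_def by metis
      define A where "A = {a \<in> \<pi>. tgt C a = x \<and> Fm a = a'}"
      define B where "B = (\<lambda>a. {b \<in> \<rho>. tgt C b = src C a \<and> Fm b = b'})"
      have "fib q = Sigma A B"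
      proof
        show "fib q \<subseteq> Sigma A B" unfolding fib_def X_def g_def A_def B_def using q by auto
      next
        show "Sigma A B \<subseteq> fib q"
        proof
          fix p assume "p \<in> Sigma A B"
          then obtain a b where p: "p = (a, b)" "a \<in> \<pi>" "tgt C a = x" "Fm a = a'"
            "b \<in> \<rho>" "tgt C b = src C a" "Fm b = b'" unfolding A_def B_def by auto
          have "a \<in> Mor C" "b \<in> Mor C" using p piM rhoM by auto
          then have "Fm (comp C a b) = comp D a' b'" using func p unfolding is_functor_def by auto
          then show "p \<in> fib q" using p q unfolding fib_def X_def g_def by auto
        qed
      qed
      also have "card (Sigma A B) = (\<Sum>a\<in>A. card (B a))"
        by (rule card_SigmaI) (use finC piM rhoM in \<open>auto simp: A_def B_def intro: finite_subset\<close>)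
      also have "\<dots> = (\<Sum>a\<in>A. n \<rho>)"
      proof (rule sum.cong)
        fix a assume a: "a \<in> A"
        then have aM: "a \<in> Mor C" using A_def piM by auto
        then have "src C a \<in> Ob C" "src D a' = Fo (src C a)"
          using catC func a unfolding category_def is_functor_def A_def by auto
        then show "card (B a) = n \<rho>" using assms(5) assms(7) q unfolding B_def by auto
      qed simp
      also have "\<dots> = card A * n \<rho>" by simp
      also have "card A = n \<pi>" using assms(5) assms(6) q hx ta unfolding A_def by auto
      finally show "card (fib q) = n \<pi> * n \<rho>" by simp
    qed (simp add: gX)
    also have "\<dots> = card FP * n \<pi> * n \<rho>" by simp
    also have "card FP = pconst D \<tau> ?a ?b"
      using pconst_eq[OF qsD assms(8) aT bT hx(1)] FP_def by simp
    finally show ?thesis using L by simp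
  qed
qed

end
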